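(* Let $A,B\in\mathcal M_n$ be accretive with $W(A),W(B)\subset S_\alpha$ for some $0\le\alpha<\pi/2$. Let $f\in\mathfrak m$ with $f'(1)=t\in(0,1)$. Then $$\cos^2(\alpha)\,\Re(A!_tB)\le\Re(A\sigma_fB)\le\sec^2(\alpha)\,\Re(A\nabla_tB).$$
   Context: A matrix $A$ is accretive if $\Re A=\frac{A+A^*}{2}$ is positive definite. $W(A)$ is the numerical range, $S_\alpha=\{z:\Re z>0,\ |\Im z|\le\tan(\alpha)\Re z\}$. $\le$ is the Löwner order. $\mathfrak m$ is the set of matrix monotone $f:(0,\infty)\to(0,\infty)$ with $f(1)=1$; each has a unique probability measure $\nu_f$ on $[0,1]$ with $f(x)=\int_0^1((1-t)+tx^{-1})^{-1}d\nu_f(t)$, $x>0$. For accretive $A,B$: $A\nabla_tB=(1-t)A+tB$, $A!_tB=((1-t)A^{-1}+tB^{-1})^{-1}$, and $A\sigma_fB:=\int_0^1A!_sB\,d\nu_f(s)$. *)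

theory Defs
  imports "HOL-Probability.Probability" "Jordan_Normal_Form.Schur_Decomposition"
begin

text \<open>Complex n x n matrices are Jordan_Normal_Form matrices in carrier_mat n n.
  The quadratic form x^* M x is written (mult_mat_vec M x) \<bullet>c x.\<close>

definition hermitian_mat :: "complex mat \<Rightarrow> bool" where
  "hermitian_mat M \<longleftrightarrow> square_mat M \<and> mat_adjoint M = M"

definition pos_def_mat :: "complex mat \<Rightarrow> bool" where
  "pos_def_mat M \<longleftrightarrow> hermitian_mat M \<and>
     (\<forall>x \<in> carrier_vec (dim_row M). x \<noteq> 0\<^sub>v (dim_row M) \<longrightarrow>
        Im ((mult_mat_vec M x) \<bullet>c x) = 0 \<and> Re ((mult_mat_vec M x) \<bullet>c x) > 0)"

definition pos_semidef_mat :: "complex mat \<Rightarrow> bool" where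
  "pos_semidef_mat M \<longleftrightarrow> hermitian_mat M \<and>
     (\<forall>x \<in> carrier_vec (dim_row M).
        Im ((mult_mat_vec M x) \<bullet>c x) = 0 \<and> Re ((mult_mat_vec M x) \<bullet>c x) \<ge> 0)"

definition loewner_le :: "complex mat \<Rightarrow> complex mat \<Rightarrow> bool" where
  "loewner_le A B \<longleftrightarrow> dim_row A = dim_row B \<and> dim_col A = dim_col B \<and>
     pos_semidef_mat (B - A)"

definition re_mat :: "complex mat \<Rightarrow> complex mat" where
  "re_mat A = (1/2 :: complex) \<cdot>\<^sub>m (A + mat_adjoint A)"

definition accretive :: "complex mat \<Rightarrow> bool" where
  "accretive A \<longleftrightarrow> square_mat A \<and> pos_def_mat (re_mat A)"

definition num_range :: "complex mat \<Rightarrow> complex set" where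
  "num_range A = {(mult_mat_vec A x) \<bullet>c x | x. x \<in> carrier_vec (dim_col A) \<and> x \<bullet>c x = 1}"

definition sector :: "real \<Rightarrow> complex set" where
  "sector \<alpha> = {z. Re z > 0 \<and> \<bar>Im z\<bar> \<le> tan \<alpha> * Re z}"

definition minv :: "complex mat \<Rightarrow> complex mat" where
  "minv A = (SOME B. B \<in> carrier_mat (dim_row A) (dim_row A) \<and>
                     A * B = 1\<^sub>m (dim_row A) \<and> B * A = 1\<^sub>m (dim_row A))"

definition unitary_mat :: "complex mat \<Rightarrow> bool" where
  "unitary_mat U \<longleftrightarrow> square_mat U \<and> mat_adjoint U * U = 1\<^sub>m (dim_row U)
                                  \<and> U * mat_adjoint U = 1\<^sub>m (dim_row U)"

definition mat_fun :: "(real \<Rightarrow> real) \<Rightarrow> complex mat \<Rightarrow> complex mat" where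
  "mat_fun f A = (SOME M. \<exists>U D. U \<in> carrier_mat (dim_row A) (dim_row A) \<and>
       D \<in> carrier_mat (dim_row A) (dim_row A) \<and> unitary_mat U \<and> diagonal_mat D \<and>
       (\<forall>i < dim_row A. D $$ (i,i) = complex_of_real (Re (D $$ (i,i)))) \<and>
       A = U * D * mat_adjoint U \<and>
       M = U * mat (dim_row A) (dim_row A)
             (\<lambda>(i,j). if i = j then complex_of_real (f (Re (D $$ (i,i)))) else 0)
           * mat_adjoint U)"

definition matrix_monotone_class :: "(real \<Rightarrow> real) \<Rightarrow> bool" where
  "matrix_monotone_class f \<longleftrightarrow> (\<forall>x>0. f x > 0) \<and> f 1 = 1 \<and>
     (\<forall>n A B. A \<in> carrier_mat n n \<longrightarrow> B \<in> carrier_mat n n \<longrightarrow>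
        pos_def_mat A \<longrightarrow> pos_def_mat B \<longrightarrow> loewner_le A B \<longrightarrow>
        loewner_le (mat_fun f A) (mat_fun f B))"

definition represents :: "real measure \<Rightarrow> (real \<Rightarrow> real) \<Rightarrow> bool" where
  "represents \<nu> f \<longleftrightarrow> prob_space \<nu> \<and> sets \<nu> = sets (restrict_space borel {0..1::real}) \<and>
     (\<forall>x>0. f x = (\<integral>s. inverse ((1 - s) + s * inverse x) \<partial>\<nu>))"

definition arith_mean :: "real \<Rightarrow> complex mat \<Rightarrow> complex mat \<Rightarrow> complex mat" where
  "arith_mean t A B = complex_of_real (1 - t) \<cdot>\<^sub>m A + complex_of_real t \<cdot>\<^sub>m B"

definition harm_mean :: "real \<Rightarrow> complex mat \<Rightarrow> complex mat \<Rightarrow> complex mat" where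
  "harm_mean t A B = minv (complex_of_real (1 - t) \<cdot>\<^sub>m minv A + complex_of_real t \<cdot>\<^sub>m minv B)"

definition op_mean :: "real measure \<Rightarrow> complex mat \<Rightarrow> complex mat \<Rightarrow> complex mat" where
  "op_mean \<nu> A B = mat (dim_row A) (dim_col A)
      (\<lambda>(i,j). \<integral>s. harm_mean s A B $$ (i,j) \<partial>\<nu>)"

end

theory Submission
  imports Defs
begin

no_notation Finite_Cartesian_Product.vec.vec_nth (infixl "$" 90)
no_notation Inner_Product.real_inner_class.inner (infix "\<bullet>" 70)

definition F :: "complex mat \<Rightarrow> complex vec \<Rightarrow> complex vec \<Rightarrow> complex" where
  "F M y x = (M *\<^sub>v x) \<bullet>c y"

lemma F_sum:
  assumes "M \<in> carrier_mat n n" "x \<in> carrier_vec n" "y \<in> carrier_vec n"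
  shows "F M y x = (\<Sum>i<n. \<Sum>j<n. M $$ (i,j) * x $ j * cnj (y $ i))"
proof -
  have "F M y x = (\<Sum>i\<in>{0..<n}. (M *\<^sub>v x) $ i * cnj (y $ i))"
    using assms unfolding F_def scalar_prod_def by simp
  also have "\<dots> = (\<Sum>i<n. (\<Sum>j<n. M $$ (i,j) * x $ j) * cnj (y $ i))"
    using assms by (intro sum.cong) (auto simp: scalar_prod_def atLeast0LessThan)
  also have "\<dots> = (\<Sum>i<n. \<Sum>j<n. M $$ (i,j) * x $ j * cnj (y $ i))"
    by (simp add: sum_distrib_right)
  finally show ?thesis .
qed

lemma F_expand:
  assumes M: "M \<in> carrier_mat n n" and x: "x \<in> carrier_vec n" and d: "d \<in> carrier_vec n"
  shows "F M (a \<cdot>\<^sub>v x + b \<cdot>\<^sub>v d) (c \<cdot>\<^sub>v x + e \<cdot>\<^sub>v d) =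
     cnj a * c * F M x x + cnj a * e * F M x d + cnj b * c * F M d x + cnj b * e * F M d d"
proof -
  have c1: "a \<cdot>\<^sub>v x + b \<cdot>\<^sub>v d \<in> carrier_vec n" "c \<cdot>\<^sub>v x + e \<cdot>\<^sub>v d \<in> carrier_vec n"
    using x d by auto
  have "F M (a \<cdot>\<^sub>v x + b \<cdot>\<^sub>v d) (c \<cdot>\<^sub>v x + e \<cdot>\<^sub>v d) =
     (\<Sum>i<n. \<Sum>j<n. M $$ (i,j) * (c * x $ j + e * d $ j) * cnj (a * x $ i + b * d $ i))"
    unfolding F_sum[OF M c1(2) c1(1)] using x d
    by (intro sum.cong refl) auto
  also have "\<dots> = (\<Sum>i<n. \<Sum>j<n. cnj a * c * (M $$ (i,j) * x $ j * cnj (x $ i))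
      + cnj a * e * (M $$ (i,j) * d $ j * cnj (x $ i))
      + cnj b * c * (M $$ (i,j) * x $ j * cnj (d $ i))
      + cnj b * e * (M $$ (i,j) * d $ j * cnj (d $ i)))"
    by (intro sum.cong refl) (simp add: algebra_simps)
  also have "\<dots> = cnj a * c * F M x x + cnj a * e * F M x d + cnj b * c * F M d x + cnj b * e * F M d d"
    unfolding F_sum[OF M x x] F_sum[OF M d x] F_sum[OF M x d] F_sum[OF M d d]
    by (simp add: sum.distrib sum_distrib_left)
  finally show ?thesis .
qed

lemma F_add_mat:
  assumes "M \<in> carrier_mat n n" "N \<in> carrier_mat n n" "x \<in> carrier_vec n" "y \<in> carrier_vec n"
  shows "F (a \<cdot>\<^sub>m M + b \<cdot>\<^sub>m N) y x = a * F M y x + b * F N y x"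
proof -
  have c: "a \<cdot>\<^sub>m M + b \<cdot>\<^sub>m N \<in> carrier_mat n n" using assms by auto
  show ?thesis
    unfolding F_sum[OF c assms(3,4)] F_sum[OF assms(1,3,4)] F_sum[OF assms(2,3,4)]
    using assms by (simp add: sum.distrib sum_distrib_left algebra_simps)
qed

lemma F_conj:
  assumes "M \<in> carrier_mat n n" "x \<in> carrier_vec n" "y \<in> carrier_vec n"
  shows "(M *\<^sub>v x) \<bullet>c y = F M y x" and "y \<bullet>c (M *\<^sub>v x) = cnj (F M y x)"
proof -
  show "(M *\<^sub>v x) \<bullet>c y = F M y x" by (simp add: F_def)
  have "y \<bullet>c (M *\<^sub>v x) = cnj ((M *\<^sub>v x) \<bullet>c y)"
    using assms unfolding scalar_prod_def by (simp add: mult.commute)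
  then show "y \<bullet>c (M *\<^sub>v x) = cnj (F M y x)" by (simp add: F_def)
qed

lemma F_one: assumes "x \<in> carrier_vec n" "y \<in> carrier_vec n"
  shows "F (1\<^sub>m n) y x = x \<bullet>c y" using assms by (simp add: F_def)

lemma cinner_swap: assumes "x \<in> carrier_vec n" "y \<in> carrier_vec n"
  shows "x \<bullet>c y = cnj (y \<bullet>c x)"
  using assms unfolding scalar_prod_def by (simp add: mult.commute)

lemma cinner_self: assumes "x \<in> carrier_vec n"
  shows "x \<bullet>c x = complex_of_real (\<Sum>i<n. (cmod (x $ i))\<^sup>2)"
  using assms unfolding scalar_prod_def
  by (simp add: atLeast0LessThan of_real_sum complex_norm_square del: of_real_power)

lemma cinner_self_pos: assumes "x \<in> carrier_vec n" "x \<noteq> 0\<^sub>v n"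
  shows "(\<Sum>i<n. (cmod (x $ i))\<^sup>2) > 0"
proof -
  obtain i where i: "i < n" "x $ i \<noteq> 0" using assms by (metis eq_vecI carrier_vecD index_zero_vec)
  have "(cmod (x $ i))\<^sup>2 \<le> (\<Sum>i<n. (cmod (x $ i))\<^sup>2)"
    using i by (intro member_le_sum) auto
  moreover have "(cmod (x $ i))\<^sup>2 > 0" using i by simp
  ultimately show ?thesis by linarith
qed


definition sect :: "complex mat \<Rightarrow> nat \<Rightarrow> real \<Rightarrow> bool" where
  "sect M n \<tau> \<longleftrightarrow> (\<forall>v\<in>carrier_vec n. \<bar>Im (F M v v)\<bar> \<le> \<tau> * Re (F M v v) \<and> 0 \<le> Re (F M v v))"

lemma lemS_scalar:
  fixes p q r s :: complex and \<tau> :: real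
  assumes t: "\<tau> \<ge> 0"
    and h1: "\<bar>Im s\<bar> \<le> \<tau> * Re s" and hs0: "0 \<le> Re s"
    and h0: "\<bar>Im p\<bar> \<le> \<tau> * Re p"
    and h2: "\<bar>Im (p+q+r+s)\<bar> \<le> \<tau> * Re (p+q+r+s)"
    and h3: "\<bar>Im (p + \<i>*q - \<i>*r + s)\<bar> \<le> \<tau> * Re (p + \<i>*q - \<i>*r + s)"
    and h4: "\<bar>Im (\<tau>\<^sup>2*p - \<i>*\<tau>*q + \<i>*\<tau>*r + s)\<bar> \<le> \<tau> * Re (\<tau>\<^sup>2*p - \<i>*\<tau>*q + \<i>*\<tau>*r + s)"
    and h5: "\<bar>Im (\<tau>\<^sup>2*p + \<i>*\<tau>*q - \<i>*\<tau>*r + s)\<bar> \<le> \<tau> * Re (\<tau>\<^sup>2*p + \<i>*\<tau>*q - \<i>*\<tau>*r + s)"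
  shows "\<tau>\<^sup>2 * Re p + Re s + Re r - Re q \<ge> 0" and "\<tau>\<^sup>2 * Re p + Re s + Re q - Re r \<ge> 0"
proof -
  have "\<tau>\<^sup>2 * Re p + Re s + Re r - Re q \<ge> 0 \<and> \<tau>\<^sup>2 * Re p + Re s + Re q - Re r \<ge> 0"
  proof (cases "\<tau> = 0")
    case True
    then have "Im s = 0" "Im p = 0" "Im (p+q+r+s) = 0" "Im (p + \<i>*q - \<i>*r + s) = 0" "Re s \<ge> 0"
      using h0 h1 h2 h3 hs0 by auto
    then show ?thesis using True by simp
  next
    case False
    then have tp: "\<tau> > 0" using t by simp
    have a4: "\<tau> * Re (\<tau>\<^sup>2*p - \<i>*\<tau>*q + \<i>*\<tau>*r + s) + Im (\<tau>\<^sup>2*p - \<i>*\<tau>*q + \<i>*\<tau>*r + s) \<ge> 0"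
      "\<tau> * Re (\<tau>\<^sup>2*p - \<i>*\<tau>*q + \<i>*\<tau>*r + s) - Im (\<tau>\<^sup>2*p - \<i>*\<tau>*q + \<i>*\<tau>*r + s) \<ge> 0"
      using h4 by linarith+
    have a5: "\<tau> * Re (\<tau>\<^sup>2*p + \<i>*\<tau>*q - \<i>*\<tau>*r + s) + Im (\<tau>\<^sup>2*p + \<i>*\<tau>*q - \<i>*\<tau>*r + s) \<ge> 0"
      "\<tau> * Re (\<tau>\<^sup>2*p + \<i>*\<tau>*q - \<i>*\<tau>*r + s) - Im (\<tau>\<^sup>2*p + \<i>*\<tau>*q - \<i>*\<tau>*r + s) \<ge> 0"
      using h5 by linarith+
    have e1: "\<tau> * Re (\<tau>\<^sup>2*p - \<i>*\<tau>*q + \<i>*\<tau>*r + s) + Im (\<tau>\<^sup>2*p - \<i>*\<tau>*q + \<i>*\<tau>*r + s)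
      + (\<tau> * Re (\<tau>\<^sup>2*p + \<i>*\<tau>*q - \<i>*\<tau>*r + s) - Im (\<tau>\<^sup>2*p + \<i>*\<tau>*q - \<i>*\<tau>*r + s))
      = 2 * \<tau> * (\<tau>\<^sup>2 * Re p + Re s + Re r - Re q)"
      by (simp add: algebra_simps power2_eq_square)
    have e2: "\<tau> * Re (\<tau>\<^sup>2*p - \<i>*\<tau>*q + \<i>*\<tau>*r + s) - Im (\<tau>\<^sup>2*p - \<i>*\<tau>*q + \<i>*\<tau>*r + s)
      + (\<tau> * Re (\<tau>\<^sup>2*p + \<i>*\<tau>*q - \<i>*\<tau>*r + s) + Im (\<tau>\<^sup>2*p + \<i>*\<tau>*q - \<i>*\<tau>*r + s))
      = 2 * \<tau> * (\<tau>\<^sup>2 * Re p + Re s + Re q - Re r)"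
      by (simp add: algebra_simps power2_eq_square)
    have "2 * \<tau> * (\<tau>\<^sup>2 * Re p + Re s + Re r - Re q) \<ge> 0" "2 * \<tau> * (\<tau>\<^sup>2 * Re p + Re s + Re q - Re r) \<ge> 0"
      using a4 a5 e1 e2 by linarith+
    then show ?thesis using tp by (simp add: zero_le_mult_iff)
  qed
  then show "\<tau>\<^sup>2 * Re p + Re s + Re r - Re q \<ge> 0" and "\<tau>\<^sup>2 * Re p + Re s + Re q - Re r \<ge> 0" by auto
qed

lemma lemS:
  assumes M: "M \<in> carrier_mat n n" and t: "\<tau> \<ge> 0" and S: "sect M n \<tau>"
    and x: "x \<in> carrier_vec n" and z: "z \<in> carrier_vec n"
  shows "2 * Re (F M x z) - Re (F M z z) \<le> (1 + \<tau>\<^sup>2) * Re (F M x x)"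
    and "2 * Re (F M z x) - Re (F M z z) \<le> (1 + \<tau>\<^sup>2) * Re (F M x x)"
proof -
  define d where "d = z - x"
  have d: "d \<in> carrier_vec n" using x z d_def by auto
  have xe: "x = 1 \<cdot>\<^sub>v x + 0 \<cdot>\<^sub>v d" using x d by auto
  have ze: "z = 1 \<cdot>\<^sub>v x + 1 \<cdot>\<^sub>v d" using x z d_def by auto
  have de: "d = 0 \<cdot>\<^sub>v x + 1 \<cdot>\<^sub>v d" using x d by auto
  let ?p = "F M x x" and ?q = "F M x d" and ?r = "F M d x" and ?s = "F M d d"
  have G: "\<And>a b. \<bar>Im (F M (a \<cdot>\<^sub>v x + b \<cdot>\<^sub>v d) (a \<cdot>\<^sub>v x + b \<cdot>\<^sub>v d))\<bar>
      \<le> \<tau> * Re (F M (a \<cdot>\<^sub>v x + b \<cdot>\<^sub>v d) (a \<cdot>\<^sub>v x + b \<cdot>\<^sub>v d))"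
    using S x d unfolding sect_def by auto
  note E = F_expand[OF M x d]
  have h1: "\<bar>Im ?s\<bar> \<le> \<tau> * Re ?s" using G[of 0 1] unfolding E by simp

  have h0: "\<bar>Im ?p\<bar> \<le> \<tau> * Re ?p" using G[of 1 0] unfolding E by simp
  have h2: "\<bar>Im (?p+?q+?r+?s)\<bar> \<le> \<tau> * Re (?p+?q+?r+?s)" using G[of 1 1] unfolding E by simp
  have h3: "\<bar>Im (?p + \<i>*?q - \<i>*?r + ?s)\<bar> \<le> \<tau> * Re (?p + \<i>*?q - \<i>*?r + ?s)"
    using G[of 1 \<i>] unfolding E by (simp add: algebra_simps)
  have h4: "\<bar>Im (\<tau>\<^sup>2*?p - \<i>*\<tau>*?q + \<i>*\<tau>*?r + ?s)\<bar> \<le> \<tau> * Re (\<tau>\<^sup>2*?p - \<i>*\<tau>*?q + \<i>*\<tau>*?r + ?s)"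
  proof -
    have "cnj (\<i> * \<tau>) * (\<i> * \<tau>) = \<tau>\<^sup>2" by (simp add: power2_eq_square complex_eq_iff)
    moreover have "cnj (\<i> * \<tau>) = - \<i> * \<tau>" by simp
    ultimately show ?thesis using G[of "\<i>*\<tau>" 1] unfolding E by (simp add: algebra_simps)
  qed
  have h5: "\<bar>Im (\<tau>\<^sup>2*?p + \<i>*\<tau>*?q - \<i>*\<tau>*?r + ?s)\<bar> \<le> \<tau> * Re (\<tau>\<^sup>2*?p + \<i>*\<tau>*?q - \<i>*\<tau>*?r + ?s)"
  proof -
    have "cnj (- \<i> * \<tau>) * (- \<i> * \<tau>) = \<tau>\<^sup>2" by (simp add: power2_eq_square complex_eq_iff)
    moreover have "cnj (- \<i> * \<tau>) = \<i> * \<tau>" by simp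
    ultimately show ?thesis using G[of "- \<i>*\<tau>" 1] unfolding E by (simp add: algebra_simps)
  qed
  have hs0: "0 \<le> Re ?s" using S d unfolding sect_def by auto
  note R = lemS_scalar[OF t h1 hs0 h0 h2 h3 h4 h5]
  have fz: "F M x z = ?p + ?q" "F M z z = ?p + ?q + ?r + ?s" "F M z x = ?p + ?r"
  proof -
    have "F M x z = F M (1 \<cdot>\<^sub>v x + 0 \<cdot>\<^sub>v d) (1 \<cdot>\<^sub>v x + 1 \<cdot>\<^sub>v d)"
      "F M z z = F M (1 \<cdot>\<^sub>v x + 1 \<cdot>\<^sub>v d) (1 \<cdot>\<^sub>v x + 1 \<cdot>\<^sub>v d)"
      "F M z x = F M (1 \<cdot>\<^sub>v x + 1 \<cdot>\<^sub>v d) (1 \<cdot>\<^sub>v x + 0 \<cdot>\<^sub>v d)"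
      by (simp only: flip: xe ze)+
    then show "F M x z = ?p + ?q" "F M z z = ?p + ?q + ?r + ?s" "F M z x = ?p + ?r"
      unfolding E by simp_all
  qed
  show "2 * Re (F M x z) - Re (F M z z) \<le> (1 + \<tau>\<^sup>2) * Re (F M x x)"
    using R(1) unfolding fz by (simp add: algebra_simps)
  show "2 * Re (F M z x) - Re (F M z z) \<le> (1 + \<tau>\<^sup>2) * Re (F M x x)"
    using R(2) unfolding fz by (simp add: algebra_simps)
qed


definition posf :: "complex mat \<Rightarrow> nat \<Rightarrow> bool" where
  "posf M n \<longleftrightarrow> (\<forall>v\<in>carrier_vec n. v \<noteq> 0\<^sub>v n \<longrightarrow> Re (F M v v) > 0)"

lemma F_scale:
  assumes "M \<in> carrier_mat n n" "x \<in> carrier_vec n" "y \<in> carrier_vec n"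
  shows "F M (a \<cdot>\<^sub>v y) (c \<cdot>\<^sub>v x) = cnj a * c * F M y x"
proof -
  have c: "a \<cdot>\<^sub>v y \<in> carrier_vec n" "c \<cdot>\<^sub>v x \<in> carrier_vec n" using assms by auto
  show ?thesis unfolding F_sum[OF assms(1) c(2) c(1)] F_sum[OF assms]
    using assms by (simp add: sum_distrib_left algebra_simps)
qed

lemma sector_from_range:
  assumes A: "A \<in> carrier_mat n n" and R: "num_range A \<subseteq> sector \<alpha>"
  shows "sect A n (tan \<alpha>)" and "posf A n"
proof -
  have key: "\<bar>Im (F A v v)\<bar> \<le> tan \<alpha> * Re (F A v v) \<and> 0 < Re (F A v v)"
    if v: "v \<in> carrier_vec n" "v \<noteq> 0\<^sub>v n" for v
  proof -
    define N where "N = (\<Sum>i<n. (cmod (v $ i))\<^sup>2)"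
    have N: "N > 0" using cinner_self_pos[OF v] N_def by simp
    define r where "r = sqrt N"
    have r: "r > 0" "r * r = N" using N r_def by auto
    define u where "u = complex_of_real (1/r) \<cdot>\<^sub>v v"
    have u: "u \<in> carrier_vec n" using v u_def by auto
    have "u \<bullet>c u = F (1\<^sub>m n) u u" using F_one[OF u u] by simp
    also have "\<dots> = cnj (complex_of_real (1/r)) * complex_of_real (1/r) * F (1\<^sub>m n) v v"
      unfolding u_def by (rule F_scale) (use v in auto)
    also have "\<dots> = 1" using F_one[OF v(1) v(1)] cinner_self[OF v(1)] r N
      by (simp add: N_def[symmetric] field_simps flip: of_real_mult)
    finally have uu: "u \<bullet>c u = 1" .
    have "F A u u \<in> num_range A" unfolding num_range_def F_def using u uu A by auto
    then have S: "F A u u \<in> sector \<alpha>" using R by auto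
    have Fu: "F A u u = complex_of_real (1/N) * F A v v"
      unfolding u_def F_scale[OF A v(1) v(1)] using r by (simp add: field_simps flip: of_real_mult)
    have "Re (F A u u) = Re (F A v v) / N" "Im (F A u u) = Im (F A v v) / N" unfolding Fu by simp_all
    with S N show ?thesis unfolding sector_def
      by (auto simp: abs_div divide_less_cancel divide_le_cancel field_simps)
  qed
  show "posf A n" unfolding posf_def using key by auto
  show "sect A n (tan \<alpha>)" unfolding sect_def
  proof
    fix v :: "complex vec" assume v: "v \<in> carrier_vec n"
    show "\<bar>Im (F A v v)\<bar> \<le> tan \<alpha> * Re (F A v v) \<and> 0 \<le> Re (F A v v)"
    proof (cases "v = 0\<^sub>v n")
      case True then show ?thesis using A by (simp add: F_def)
    next
      case False then show ?thesis using key[OF v] by auto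
    qed
  qed
qed


lemma inv_props:
  assumes M: "M \<in> carrier_mat n n" and P: "posf M n"
  shows "det M \<noteq> 0" "minv M \<in> carrier_mat n n" "M * minv M = 1\<^sub>m n" "minv M * M = 1\<^sub>m n"
    "minv M = inverse (det M) \<cdot>\<^sub>m adj_mat M"
proof -
  show dM: "det M \<noteq> 0"
  proof
    assume "det M = 0"
    then obtain v where v: "v \<in> carrier_vec n" "v \<noteq> 0\<^sub>v n" "M *\<^sub>v v = 0\<^sub>v n"
      using det_0_iff_vec_prod_zero[OF M] by auto
    then have "F M v v = 0" unfolding F_def by simp
    then show False using P v unfolding posf_def by force
  qed
  define K where "K = inverse (det M) \<cdot>\<^sub>m adj_mat M"
  have K: "K \<in> carrier_mat n n" using adj_mat(1)[OF M] K_def by auto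
  have one: "inverse (det M) \<cdot>\<^sub>m (det M \<cdot>\<^sub>m 1\<^sub>m n) = (1\<^sub>m n :: complex mat)"
    using dM by (intro eq_matI) auto
  have MK: "M * K = 1\<^sub>m n" unfolding K_def
    using mult_smult_distrib[OF M adj_mat(1)[OF M]] adj_mat(2)[OF M] one by simp
  have KM: "K * M = 1\<^sub>m n" unfolding K_def
    using mult_smult_assoc_mat[OF adj_mat(1)[OF M] M] adj_mat(3)[OF M] one by simp
  have ex: "\<exists>B. B \<in> carrier_mat (dim_row M) (dim_row M) \<and> M * B = 1\<^sub>m (dim_row M) \<and> B * M = 1\<^sub>m (dim_row M)"
    using K MK KM M by auto
  have mi: "minv M \<in> carrier_mat n n \<and> M * minv M = 1\<^sub>m n \<and> minv M * M = 1\<^sub>m n"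
    using someI_ex[OF ex] M unfolding minv_def by auto
  then show "minv M \<in> carrier_mat n n" "M * minv M = 1\<^sub>m n" "minv M * M = 1\<^sub>m n" by auto
  have "minv M = minv M * (M * K)" using MK mi by (metis right_mult_one_mat)
  also have "\<dots> = (minv M * M) * K" using assoc_mult_mat[OF _ M K, of "minv M" n] mi by simp
  also have "\<dots> = K" using mi K by simp
  finally show "minv M = inverse (det M) \<cdot>\<^sub>m adj_mat M" unfolding K_def .
qed

lemma inv_sect:
  assumes M: "M \<in> carrier_mat n n" and P: "posf M n" and S: "sect M n \<tau>"
  shows "sect (minv M) n \<tau>" "posf (minv M) n"
proof -
  note I = inv_props[OF M P]
  have key: "F (minv M) v v = cnj (F M (minv M *\<^sub>v v) (minv M *\<^sub>v v)) \<and> (minv M *\<^sub>v v) \<in> carrier_vec n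
      \<and> (v \<noteq> 0\<^sub>v n \<longrightarrow> minv M *\<^sub>v v \<noteq> 0\<^sub>v n)"
    if v: "v \<in> carrier_vec n" for v
  proof -
    let ?u = "minv M *\<^sub>v v"
    have u: "?u \<in> carrier_vec n" using I(2) v by auto
    have Mu: "M *\<^sub>v ?u = v" using assoc_mult_mat_vec[OF M I(2) v] I(3) v by simp
    have "F (minv M) v v = ?u \<bullet>c (M *\<^sub>v ?u)" unfolding F_def using Mu by simp
    also have "\<dots> = cnj (F M ?u ?u)" using F_conj(2)[OF M u u] .
    finally have e: "F (minv M) v v = cnj (F M ?u ?u)" .
    have z: "M *\<^sub>v 0\<^sub>v n = 0\<^sub>v n" by (rule eq_vecI) (use M in auto)
    show ?thesis using u Mu M z e by metis
  qed
  show "sect (minv M) n \<tau>" unfolding sect_def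
  proof
    fix v :: "complex vec" assume v: "v \<in> carrier_vec n"
    then show "\<bar>Im (F (minv M) v v)\<bar> \<le> \<tau> * Re (F (minv M) v v) \<and> 0 \<le> Re (F (minv M) v v)"
      using key[OF v] S unfolding sect_def by auto
  qed
  show "posf (minv M) n" unfolding posf_def
  proof (intro ballI impI)
    fix v :: "complex vec" assume v: "v \<in> carrier_vec n" "v \<noteq> 0\<^sub>v n"
    then show "Re (F (minv M) v v) > 0"
      using key[OF v(1)] P unfolding posf_def by auto
  qed
qed

lemma comb_sect:
  assumes M: "M \<in> carrier_mat n n" and N: "N \<in> carrier_mat n n"
    and PM: "posf M n" and PN: "posf N n" and SM: "sect M n \<tau>" and SN: "sect N n \<tau>"
    and s: "0 \<le> s" "s \<le> 1"
  shows "sect (complex_of_real (1-s) \<cdot>\<^sub>m M + complex_of_real s \<cdot>\<^sub>m N) n \<tau>"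
    "posf (complex_of_real (1-s) \<cdot>\<^sub>m M + complex_of_real s \<cdot>\<^sub>m N) n"
proof -
  have E: "F (complex_of_real (1-s) \<cdot>\<^sub>m M + complex_of_real s \<cdot>\<^sub>m N) v v = (1-s) * F M v v + s * F N v v"
    if "v \<in> carrier_vec n" for v using F_add_mat[OF M N that that] by simp
  show "sect (complex_of_real (1-s) \<cdot>\<^sub>m M + complex_of_real s \<cdot>\<^sub>m N) n \<tau>" unfolding sect_def
  proof
    fix v :: "complex vec" assume v: "v \<in> carrier_vec n"
    have a: "\<bar>Im (F M v v)\<bar> \<le> \<tau> * Re (F M v v)" "0 \<le> Re (F M v v)"
      "\<bar>Im (F N v v)\<bar> \<le> \<tau> * Re (F N v v)" "0 \<le> Re (F N v v)"
      using SM SN v unfolding sect_def by auto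
    have b: "\<bar>(1-s) * Im (F M v v) + s * Im (F N v v)\<bar> \<le> (1-s) * \<bar>Im (F M v v)\<bar> + s * \<bar>Im (F N v v)\<bar>"
      using s by (metis abs_mult abs_of_nonneg abs_triangle_ineq diff_ge_0_iff_ge)
    have c: "(1-s) * \<bar>Im (F M v v)\<bar> \<le> (1-s) * (\<tau> * Re (F M v v))" "s * \<bar>Im (F N v v)\<bar> \<le> s * (\<tau> * Re (F N v v))"
      using a s by (auto intro: mult_left_mono)
    show "\<bar>Im (F (complex_of_real (1-s) \<cdot>\<^sub>m M + complex_of_real s \<cdot>\<^sub>m N) v v)\<bar>
        \<le> \<tau> * Re (F (complex_of_real (1-s) \<cdot>\<^sub>m M + complex_of_real s \<cdot>\<^sub>m N) v v) \<and>
        0 \<le> Re (F (complex_of_real (1-s) \<cdot>\<^sub>m M + complex_of_real s \<cdot>\<^sub>m N) v v)"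
      unfolding E[OF v] using a b c s mult_nonneg_nonneg[of "1-s" "Re (F M v v)"] mult_nonneg_nonneg[of s "Re (F N v v)"]
      apply (simp add: algebra_simps) using mult_nonneg_nonneg[of s "Re (F N v v)"] a s by linarith
  qed
  show "posf (complex_of_real (1-s) \<cdot>\<^sub>m M + complex_of_real s \<cdot>\<^sub>m N) n" unfolding posf_def
  proof (intro ballI impI)
    fix v :: "complex vec" assume v: "v \<in> carrier_vec n" "v \<noteq> 0\<^sub>v n"
    have "Re (F M v v) > 0" "Re (F N v v) > 0" using PM PN v unfolding posf_def by auto
    then have "(1-s) * Re (F M v v) + s * Re (F N v v) > 0" using s
      by (cases "s = 0") (auto intro: add_nonneg_pos add_pos_nonneg)
    then show "Re (F (complex_of_real (1-s) \<cdot>\<^sub>m M + complex_of_real s \<cdot>\<^sub>m N) v v) > 0"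
      unfolding E[OF v(1)] by simp
  qed
qed


locale setting =
  fixes A B :: "complex mat" and n :: nat and \<tau> :: real
  assumes A: "A \<in> carrier_mat n n" and B: "B \<in> carrier_mat n n"
    and PA: "posf A n" and PB: "posf B n" and SA: "sect A n \<tau>" and SB: "sect B n \<tau>"
    and tau: "\<tau> \<ge> 0"
begin

definition Cm :: "real \<Rightarrow> complex mat" where
  "Cm s = complex_of_real (1-s) \<cdot>\<^sub>m minv A + complex_of_real s \<cdot>\<^sub>m minv B"

lemma Ai: "minv A \<in> carrier_mat n n" "posf (minv A) n" "sect (minv A) n \<tau>"
  using inv_props(2)[OF A PA] inv_sect[OF A PA SA] by auto
lemma Bi: "minv B \<in> carrier_mat n n" "posf (minv B) n" "sect (minv B) n \<tau>"
  using inv_props(2)[OF B PB] inv_sect[OF B PB SB] by auto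

lemma Cm_carrier: "Cm s \<in> carrier_mat n n" unfolding Cm_def using Ai Bi by auto

lemma Cm_props: assumes "0 \<le> s" "s \<le> 1"
  shows "posf (Cm s) n" "sect (Cm s) n \<tau>"
  using comb_sect[OF Ai(1) Bi(1) Ai(2) Bi(2) Ai(3) Bi(3) assms] unfolding Cm_def by auto

lemma harm_eq: "harm_mean s A B = minv (Cm s)" unfolding harm_mean_def Cm_def ..

lemma F_Cm: assumes "v \<in> carrier_vec n" "y \<in> carrier_vec n"
  shows "F (Cm s) y v = complex_of_real (1-s) * F (minv A) y v + complex_of_real s * F (minv B) y v"
  unfolding Cm_def using F_add_mat[OF Ai(1) Bi(1) assms] by simp

lemma H_props: assumes "0 \<le> s" "s \<le> 1" and x: "x \<in> carrier_vec n"
  shows "minv (Cm s) \<in> carrier_mat n n" "minv (Cm s) *\<^sub>v x \<in> carrier_vec n"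
    "Cm s *\<^sub>v (minv (Cm s) *\<^sub>v x) = x"
proof -
  note I = inv_props[OF Cm_carrier[of s] Cm_props(1)[OF assms(1,2)]]
  show "minv (Cm s) \<in> carrier_mat n n" using I by auto
  then show "minv (Cm s) *\<^sub>v x \<in> carrier_vec n" using x by auto
  show "Cm s *\<^sub>v (minv (Cm s) *\<^sub>v x) = x"
    using assoc_mult_mat_vec[OF Cm_carrier[of s] I(2) x] I(3) x by simp
qed

lemma U1:
  assumes M: "M \<in> carrier_mat n n" and P: "posf M n" and S: "sect M n \<tau>"
    and x: "x \<in> carrier_vec n" and w: "w \<in> carrier_vec n"
  shows "2 * Re (x \<bullet>c w) - Re (F (minv M) w w) \<le> (1 + \<tau>\<^sup>2) * Re (F M x x)"
proof -
  note I = inv_props[OF M P]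
  let ?z = "minv M *\<^sub>v w"
  have z: "?z \<in> carrier_vec n" using I(2) w by auto
  have Mz: "M *\<^sub>v ?z = w" using assoc_mult_mat_vec[OF M I(2) w] I(3) w by simp
  have e1: "x \<bullet>c w = cnj (F M x ?z)" using F_conj(2)[OF M z x] Mz by simp
  have e2: "F (minv M) w w = cnj (F M ?z ?z)" unfolding F_def using F_conj(2)[OF M z z] Mz F_def by simp
  show ?thesis using lemS(1)[OF M tau S x z] unfolding e1 e2 by simp
qed

lemma PU:
  assumes s: "0 \<le> s" "s \<le> 1" and x: "x \<in> carrier_vec n"
  shows "Re (F (minv (Cm s)) x x) \<le> (1 + \<tau>\<^sup>2) * ((1-s) * Re (F A x x) + s * Re (F B x x))"
proof -
  note H = H_props[OF s x]
  let ?w = "minv (Cm s) *\<^sub>v x"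
  have e1: "F (minv (Cm s)) x x = ?w \<bullet>c x" unfolding F_def ..
  have e2: "F (Cm s) ?w ?w = x \<bullet>c ?w" unfolding F_def using H(3) by simp
  have e3: "x \<bullet>c ?w = cnj (?w \<bullet>c x)" using cinner_swap[OF x H(2)] .
  have e4: "F (Cm s) ?w ?w = (1-s) * F (minv A) ?w ?w + s * F (minv B) ?w ?w"
    using F_Cm[OF H(2) H(2), of s] by simp
  have r: "Re (F (minv (Cm s)) x x) = Re (x \<bullet>c ?w)" unfolding e1 e3 by simp
  have r2: "Re (x \<bullet>c ?w) = (1-s) * Re (F (minv A) ?w ?w) + s * Re (F (minv B) ?w ?w)"
    using e2 e4 by (metis Re_complex_of_real plus_complex.sel(1) times_complex.sel(1) Im_complex_of_real
        mult_zero_left diff_zero)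
  have ua: "2 * Re (x \<bullet>c ?w) - Re (F (minv A) ?w ?w) \<le> (1 + \<tau>\<^sup>2) * Re (F A x x)"
    using U1[OF A PA SA x H(2)] .
  have ub: "2 * Re (x \<bullet>c ?w) - Re (F (minv B) ?w ?w) \<le> (1 + \<tau>\<^sup>2) * Re (F B x x)"
    using U1[OF B PB SB x H(2)] .
  have "Re (x \<bullet>c ?w) = (1-s) * (2 * Re (x \<bullet>c ?w) - Re (F (minv A) ?w ?w))
          + s * (2 * Re (x \<bullet>c ?w) - Re (F (minv B) ?w ?w))"
    using r2 by (simp add: algebra_simps)
  also have "\<dots> \<le> (1-s) * ((1 + \<tau>\<^sup>2) * Re (F A x x)) + s * ((1 + \<tau>\<^sup>2) * Re (F B x x))"
    using ua ub s by (intro add_mono mult_left_mono) auto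
  finally show ?thesis unfolding r by (simp add: algebra_simps)
qed

lemma PL:
  assumes s: "0 \<le> s" "s \<le> 1" and x: "x \<in> carrier_vec n" and y: "y \<in> carrier_vec n"
  shows "2 * Re (x \<bullet>c y) - ((1-s) * Re (F (minv A) y y) + s * Re (F (minv B) y y))
      \<le> (1 + \<tau>\<^sup>2) * Re (F (minv (Cm s)) x x)"
proof -
  note H = H_props[OF s x]
  let ?w = "minv (Cm s) *\<^sub>v x"
  have e1: "F (minv (Cm s)) x x = ?w \<bullet>c x" unfolding F_def ..
  have e2: "F (Cm s) ?w ?w = x \<bullet>c ?w" unfolding F_def using H(3) by simp
  have e3: "x \<bullet>c ?w = cnj (?w \<bullet>c x)" using cinner_swap[OF x H(2)] .
  have e5: "F (Cm s) y ?w = x \<bullet>c y" unfolding F_def using H(3) by simp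
  have e6: "F (Cm s) y y = (1-s) * F (minv A) y y + s * F (minv B) y y" using F_Cm[OF y y, of s] by simp
  have L: "2 * Re (F (Cm s) y ?w) - Re (F (Cm s) y y) \<le> (1 + \<tau>\<^sup>2) * Re (F (Cm s) ?w ?w)"
    using lemS(2)[OF Cm_carrier[of s] tau Cm_props(2)[OF s] H(2) y] .
  have r: "Re (F (Cm s) ?w ?w) = Re (F (minv (Cm s)) x x)" unfolding e1 e2 e3 by simp
  have r6: "Re (F (Cm s) y y) = (1-s) * Re (F (minv A) y y) + s * Re (F (minv B) y y)"
    unfolding e6 by simp
  show ?thesis using L unfolding e5 r r6 .
qed

lemma Pt:
  assumes s: "0 \<le> s" "s \<le> 1" and x: "x \<in> carrier_vec n"
  defines "y \<equiv> minv (Cm s) *\<^sub>v x"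
  shows "2 * Re (x \<bullet>c y) - ((1-s) * Re (F (minv A) y y) + s * Re (F (minv B) y y))
      = Re (F (minv (Cm s)) x x)" "y \<in> carrier_vec n"
proof -
  note H = H_props[OF s x]
  have e1: "F (minv (Cm s)) x x = y \<bullet>c x" unfolding F_def y_def ..
  have e2: "F (Cm s) y y = x \<bullet>c y" unfolding F_def using H(3) y_def by simp
  have e3: "x \<bullet>c y = cnj (y \<bullet>c x)" using cinner_swap[OF x H(2)] y_def by simp
  have e6: "F (Cm s) y y = (1-s) * F (minv A) y y + s * F (minv B) y y" using F_Cm[OF H(2) H(2), of s] y_def by simp
  have "Re (F (Cm s) y y) = (1-s) * Re (F (minv A) y y) + s * Re (F (minv B) y y)"
    unfolding e6 by simp
  then show "2 * Re (x \<bullet>c y) - ((1-s) * Re (F (minv A) y y) + s * Re (F (minv B) y y))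
      = Re (F (minv (Cm s)) x x)" using e1 e2 e3 by simp
  show "y \<in> carrier_vec n" using H y_def by simp
qed

end

locale nu =
  fixes \<nu> :: "real measure"
  assumes PS: "prob_space \<nu>" and SE: "sets \<nu> = sets (restrict_space borel {0..1::real})"
begin

lemma sp: "space \<nu> = {0..1}"
  using sets_eq_imp_space_eq[OF SE] by simp

lemma cont_meas:
  fixes g :: "real \<Rightarrow> 'a::topological_space"
  assumes "continuous_on {0..1} g" shows "g \<in> borel_measurable \<nu>"
proof -
  have "\<nu> \<rightarrow>\<^sub>M (borel :: 'a measure) = restrict_space borel {0..1} \<rightarrow>\<^sub>M borel" by (rule measurable_cong_sets[OF SE]) simp
  then show ?thesis using borel_measurable_continuous_on_restrict[OF assms] by simp
qed

lemma cont_int: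
  fixes g :: "real \<Rightarrow> 'a::{banach, second_countable_topology}"
  assumes c: "continuous_on {0..1} g" shows "integrable \<nu> g"
proof -
  have "compact (g ` {0..1})" using compact_continuous_image[OF c] by simp
  then obtain K where K: "\<forall>y\<in>g ` {0..1}. norm y \<le> K"
    using compact_imp_bounded bounded_iff by metis
  have "AE s in \<nu>. norm (g s) \<le> K" using K sp by (intro AE_I2) auto
  moreover have "finite_measure \<nu>" using PS prob_space.axioms(1) by blast
  ultimately show ?thesis
    using finite_measure.integrable_const_bound cont_meas[OF c] by blast
qed

lemma int_const: "(\<integral>s. c \<partial>\<nu>) = (c :: real)"
  using prob_space.prob_space[OF PS] by simp

lemma int_mono_cont:
  fixes g h :: "real \<Rightarrow> real"
  assumes "continuous_on {0..1} g" "continuous_on {0..1} h" "\<And>s. 0 \<le> s \<Longrightarrow> s \<le> 1 \<Longrightarrow> g s \<le> h s"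
  shows "(\<integral>s. g s \<partial>\<nu>) \<le> (\<integral>s. h s \<partial>\<nu>)"
  using assms cont_int sp by (intro integral_mono) auto

lemma mean_deriv:
  assumes R: "\<forall>x>0. f x = (\<integral>s. inverse ((1 - s) + s * inverse x) \<partial>\<nu>)"
    and D: "(f has_real_derivative t) (at 1)"
  shows "(\<integral>s. s \<partial>\<nu>) = t"
proof -
  define m where "m = (\<integral>s. s \<partial>\<nu>)"
  have cid: "continuous_on {0..1} (\<lambda>s::real. s)" by (intro continuous_intros)
  have f1: "f 1 = 1"
  proof -
    have "f 1 = (\<integral>s. inverse ((1 - s) + s * inverse 1) \<partial>\<nu>)" using R by simp
    also have "\<dots> = (\<integral>s. 1 \<partial>\<nu>)" by simp
    also have "\<dots> = 1" by (rule int_const)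
    finally show ?thesis .
  qed
  have key: "\<bar>(f x - f 1) / (x - 1) - m\<bar> \<le> 2 * \<bar>x - 1\<bar>" if x: "1/2 < x" "x < 3/2" "x \<noteq> 1" for x
  proof -
    have D0: "(1 - s) * x + s \<ge> 1/2" if "0 \<le> s" "s \<le> 1" for s
    proof -
      have "(1 - s) * x + s \<ge> (1 - s) * (1/2) + s * (1/2)"
        using that x by (intro add_mono mult_left_mono) auto
      then show ?thesis by (simp add: field_simps)
    qed
    have eq: "inverse ((1 - s) + s * inverse x) = x / ((1 - s) * x + s)" if "0 \<le> s" "s \<le> 1" for s
      using x D0[OF that] by (simp add: field_simps)
    have eq2: "(inverse ((1 - s) + s * inverse x) - 1) / (x - 1) = s / ((1 - s) * x + s)"
      if "0 \<le> s" "s \<le> 1" for s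
    proof -
      have Dp: "(1 - s) * x + s > 0" using D0[OF that] by linarith
      have "x / ((1 - s) * x + s) - 1 = s * (x - 1) / ((1 - s) * x + s)"
        using Dp by (simp add: field_simps)
      then show ?thesis unfolding eq[OF that] using x Dp by simp
    qed
    have cg: "continuous_on {0..1} (\<lambda>s. s / ((1 - s) * x + s))"
      using D0 by (intro continuous_intros) force
    have cf: "continuous_on {0..1} (\<lambda>s. inverse ((1 - s) + s * inverse x))"
    proof -
      have "continuous_on {0..1} (\<lambda>s. x / ((1 - s) * x + s))"
        using D0 by (intro continuous_intros) force
      then show ?thesis apply (rule continuous_on_eq) using eq by auto
    qed
    have "(f x - f 1) / (x - 1) = (\<integral>s. (inverse ((1 - s) + s * inverse x) - 1) / (x - 1) \<partial>\<nu>)"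
    proof -
      have "(\<integral>s. inverse ((1 - s) + s * inverse x) - 1 \<partial>\<nu>) = (\<integral>s. inverse ((1 - s) + s * inverse x) \<partial>\<nu>) - (\<integral>s. 1 \<partial>\<nu>)"
        by (rule Bochner_Integration.integral_diff[OF cont_int[OF cf] cont_int]) (rule continuous_on_const)
      then have "(\<integral>s. inverse ((1 - s) + s * inverse x) - 1 \<partial>\<nu>) = f x - f 1"
        using R x f1 int_const by simp
      then show ?thesis by (simp add: integral_divide_zero)
    qed
    also have "\<dots> = (\<integral>s. s / ((1 - s) * x + s) \<partial>\<nu>)"
      using eq2 sp by (intro Bochner_Integration.integral_cong) auto
    finally have q: "(f x - f 1) / (x - 1) = (\<integral>s. s / ((1 - s) * x + s) \<partial>\<nu>)" .
    have b: "\<bar>s / ((1 - s) * x + s) - s\<bar> \<le> 2 * \<bar>x - 1\<bar>" if s: "0 \<le> s" "s \<le> 1" for s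
    proof -
      have "s / ((1 - s) * x + s) - s = s * (1 - s) * (1 - x) / ((1 - s) * x + s)"
        using D0[OF s] by (simp add: field_simps)
      also have "\<bar>\<dots>\<bar> = s * (1 - s) * \<bar>1 - x\<bar> / ((1 - s) * x + s)"
        using D0[OF s] s by (simp add: abs_mult abs_div)
      also have "\<dots> \<le> s * (1 - s) * \<bar>1 - x\<bar> / (1/2)"
        using D0[OF s] s by (intro divide_left_mono) auto
      also have "\<dots> \<le> 1 * 1 * \<bar>1 - x\<bar> / (1/2)"
        using s by (intro divide_right_mono mult_right_mono mult_mono) auto
      finally show ?thesis by (simp add: abs_minus_commute)
    qed
    have deq: "(\<integral>s. s / ((1 - s) * x + s) \<partial>\<nu>) - m = (\<integral>s. s / ((1 - s) * x + s) - s \<partial>\<nu>)"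
      unfolding m_def using cont_int[OF cg] cont_int[OF cid] by (simp add: Bochner_Integration.integral_diff)
    have cgm: "continuous_on {0..1} (\<lambda>s. s / ((1 - s) * x + s) - s)"
      using cg cid by (rule continuous_on_diff)
    have bu: "s / ((1 - s) * x + s) - s \<le> 2 * \<bar>x - 1\<bar>" "- (2 * \<bar>x - 1\<bar>) \<le> s / ((1 - s) * x + s) - s"
      if "0 \<le> s" "s \<le> 1" for s using b[OF that] by (simp_all add: abs_le_iff)
    moreover have "(\<integral>s. s / ((1 - s) * x + s) - s \<partial>\<nu>) \<le> (\<integral>s. 2 * \<bar>x - 1\<bar> \<partial>\<nu>)"
      by (rule int_mono_cont[OF cgm continuous_on_const]) (rule bu)
    moreover have "(\<integral>s. - (2 * \<bar>x - 1\<bar>) \<partial>\<nu>) \<le> (\<integral>s. s / ((1 - s) * x + s) - s \<partial>\<nu>)"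
      by (rule int_mono_cont[OF continuous_on_const cgm]) (rule bu)
    ultimately show ?thesis unfolding q int_const using deq by linarith
  qed
  have L1: "((\<lambda>y. (f y - f 1) / (y - 1)) \<longlongrightarrow> t) (at 1)"
    using D unfolding has_field_derivative_iff .
  have ev: "\<forall>\<^sub>F y in at 1. norm ((f y - f 1) / (y - 1) - m) \<le> 2 * \<bar>y - 1\<bar>"
  proof -
    have "\<forall>\<^sub>F y in at (1::real). y \<in> {1/2<..<3/2} \<and> y \<noteq> 1"
      unfolding eventually_at by (rule exI[of _ "1/2"]) (auto simp: dist_real_def abs_if split: if_splits)
    then show ?thesis by eventually_elim (use key in auto)
  qed
  have "((\<lambda>y. 2 * \<bar>y - 1\<bar>) \<longlongrightarrow> 0) (at (1::real))"
  proof -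
    have "((\<lambda>y. 2 * \<bar>y - 1\<bar>) \<longlongrightarrow> 2 * \<bar>1 - 1\<bar>) (at (1::real))"
      by (intro tendsto_intros)
    then show ?thesis by simp
  qed
  then have "((\<lambda>y. (f y - f 1) / (y - 1) - m) \<longlongrightarrow> 0) (at 1)"
    using Lim_null_comparison[OF ev] by simp
  then have L2: "((\<lambda>y. (f y - f 1) / (y - 1)) \<longlongrightarrow> m) (at 1)"
    by (simp add: LIM_zero_iff)
  show ?thesis using tendsto_unique[OF _ L2 L1] m_def by simp
qed

end

lemma cont_det:
  assumes C: "\<And>s. M s \<in> carrier_mat n n"
    and E: "\<And>i j. i < n \<Longrightarrow> j < n \<Longrightarrow> continuous_on S (\<lambda>s. M s $$ (i,j))"
  shows "continuous_on S (\<lambda>s. det (M s) :: complex)"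
proof -
  have eq: "(\<lambda>s. det (M s)) = (\<lambda>s. \<Sum> p \<in> {p. p permutes {0 ..< n}}. signof p * (\<Prod> i = 0 ..< n. M s $$ (i, p i)))"
    using det_def'[OF C] by auto
  show ?thesis unfolding eq
  proof (intro continuous_on_sum continuous_on_mult continuous_on_const continuous_on_prod)
    fix p i assume p: "p \<in> {p. p permutes {0 ..< n}}" and i: "i \<in> {0..<n}"
    then have "p i < n" using permutes_in_image[of p "{0..<n}" i] by auto
    then show "continuous_on S (\<lambda>s. M s $$ (i, p i))" using E i by auto
  qed
qed

lemma cont_cofactor:
  assumes C: "\<And>s. M s \<in> carrier_mat n n"
    and E: "\<And>i j. i < n \<Longrightarrow> j < n \<Longrightarrow> continuous_on S (\<lambda>s. M s $$ (i,j))"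
    and ij: "i < n" "j < n"
  shows "continuous_on S (\<lambda>s. cofactor (M s) i j :: complex)"
proof -
  have C': "\<And>s. mat_delete (M s) i j \<in> carrier_mat (n-1) (n-1)" using mat_delete_carrier C by blast
  have E': "continuous_on S (\<lambda>s. mat_delete (M s) i j $$ (a,b))" if "a < n - 1" "b < n - 1" for a b
  proof -
    have eq: "(\<lambda>s. mat_delete (M s) i j $$ (a,b)) = (\<lambda>s. M s $$ (if a < i then a else Suc a, if b < j then b else Suc b))"
    proof -
      have dr: "\<And>s. dim_row (M s) = n" "\<And>s. dim_col (M s) = n" using C carrier_matD by blast+
      show ?thesis using that unfolding mat_delete_def dr by (intro ext) auto
    qed
    show ?thesis unfolding eq using that by (intro E) auto
  qed
  show ?thesis unfolding cofactor_def
    by (intro continuous_on_mult continuous_on_const cont_det[OF C' E'])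
qed

locale both = setting A B n \<tau> + nu \<nu> for A B n \<tau> \<nu>
begin

lemma Cm_entry: "i < n \<Longrightarrow> j < n \<Longrightarrow>
   Cm s $$ (i,j) = complex_of_real (1-s) * minv A $$ (i,j) + complex_of_real s * minv B $$ (i,j)"
  unfolding Cm_def using Ai(1) Bi(1) by auto

lemma Cm_cont: "i < n \<Longrightarrow> j < n \<Longrightarrow> continuous_on S (\<lambda>s. Cm s $$ (i,j))"
  unfolding Cm_entry by (intro continuous_intros)

lemma H_entry_cont:
  assumes "i < n" "j < n"
  shows "continuous_on {0..1} (\<lambda>s. minv (Cm s) $$ (i,j))"
proof -
  have eq: "minv (Cm s) $$ (i,j) = inverse (det (Cm s)) * cofactor (Cm s) j i" if "s \<in> {0..1}" for s
  proof -
    have "minv (Cm s) = inverse (det (Cm s)) \<cdot>\<^sub>m adj_mat (Cm s)"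
      using inv_props(5)[OF Cm_carrier Cm_props(1)] that by auto
    then show ?thesis using assms Cm_carrier[of s] unfolding adj_mat_def by auto
  qed
  have nz: "det (Cm s) \<noteq> 0" if "s \<in> {0..1}" for s
    using inv_props(1)[OF Cm_carrier Cm_props(1)] that by auto
  have "continuous_on {0..1} (\<lambda>s. inverse (det (Cm s)) * cofactor (Cm s) j i)"
    using nz
    by (intro continuous_on_mult continuous_on_inverse cont_det[OF Cm_carrier Cm_cont]
        cont_cofactor[OF Cm_carrier Cm_cont] assms) auto
  then show ?thesis apply (rule continuous_on_eq) using eq by auto
qed

lemma Q_cont: assumes x: "x \<in> carrier_vec n"
  shows "continuous_on {0..1} (\<lambda>s. F (minv (Cm s)) x x)"
proof -
  have "continuous_on {0..1} (\<lambda>s. \<Sum>i<n. \<Sum>j<n. minv (Cm s) $$ (i,j) * x $ j * cnj (x $ i))"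
    by (intro continuous_on_sum continuous_on_mult continuous_on_const H_entry_cont) auto
  then show ?thesis apply (rule continuous_on_eq)
    using F_sum[OF _ x x] H_props(1) x by auto
qed

lemma opmean_F: assumes x: "x \<in> carrier_vec n"
  shows "Re (F (op_mean \<nu> A B) x x) = (\<integral>s. Re (F (minv (Cm s)) x x) \<partial>\<nu>)"
proof -
  have OC: "op_mean \<nu> A B \<in> carrier_mat n n" unfolding op_mean_def using A by auto
  have ent: "op_mean \<nu> A B $$ (i,j) = (\<integral>s. minv (Cm s) $$ (i,j) \<partial>\<nu>)" if "i < n" "j < n" for i j
    unfolding op_mean_def harm_eq using that A by auto
  have int: "integrable \<nu> (\<lambda>s. minv (Cm s) $$ (i,j))" if "i < n" "j < n" for i j
    using cont_int[OF H_entry_cont[OF that]] .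
  have g: "integrable \<nu> (\<lambda>s. minv (Cm s) $$ (i,j) * x $ j * cnj (x $ i))" if "i < n" "j < n" for i j
    using int[OF that] by (intro integrable_mult_left)
  have "F (op_mean \<nu> A B) x x = (\<Sum>i<n. \<Sum>j<n. (\<integral>s. minv (Cm s) $$ (i,j) \<partial>\<nu>) * x $ j * cnj (x $ i))"
    unfolding F_sum[OF OC x x] using ent by simp
  also have "\<dots> = (\<Sum>i<n. \<Sum>j<n. (\<integral>s. minv (Cm s) $$ (i,j) * x $ j * cnj (x $ i) \<partial>\<nu>))"
    by (simp add: integral_mult_left_zero)
  also have "\<dots> = (\<Sum>i<n. (\<integral>s. (\<Sum>j<n. minv (Cm s) $$ (i,j) * x $ j * cnj (x $ i)) \<partial>\<nu>))"
  proof (rule sum.cong[OF refl])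
    fix i assume i: "i \<in> {..<n}"
    show "(\<Sum>j<n. (\<integral>s. minv (Cm s) $$ (i,j) * x $ j * cnj (x $ i) \<partial>\<nu>)) =
      (\<integral>s. (\<Sum>j<n. minv (Cm s) $$ (i,j) * x $ j * cnj (x $ i)) \<partial>\<nu>)"
      by (rule Bochner_Integration.integral_sum[symmetric]) (use g i in auto)
  qed
  also have "\<dots> = (\<integral>s. (\<Sum>i<n. \<Sum>j<n. minv (Cm s) $$ (i,j) * x $ j * cnj (x $ i)) \<partial>\<nu>)"
    by (rule Bochner_Integration.integral_sum[symmetric], rule Bochner_Integration.integrable_sum) (auto intro: g)
  also have "\<dots> = (\<integral>s. F (minv (Cm s)) x x \<partial>\<nu>)"
    using F_sum[OF _ x x] H_props(1) x sp by (intro Bochner_Integration.integral_cong) auto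
  finally have e: "F (op_mean \<nu> A B) x x = (\<integral>s. F (minv (Cm s)) x x \<partial>\<nu>)" .
  show ?thesis unfolding e using integral_Re[OF cont_int[OF Q_cont[OF x]]] by simp
qed

end

lemma adj_props:
  assumes M: "M \<in> carrier_mat n n"
  shows "mat_adjoint M \<in> carrier_mat n n"
    "\<And>i j. i < n \<Longrightarrow> j < n \<Longrightarrow> mat_adjoint M $$ (i,j) = cnj (M $$ (j,i))"
proof -
  show "mat_adjoint M \<in> carrier_mat n n" unfolding mat_adjoint_def using M by auto
  fix i j assume "i < n" "j < n"
  then show "mat_adjoint M $$ (i,j) = cnj (M $$ (j,i))"
    unfolding mat_adjoint_def using M by (simp add: mat_of_rows_index)
qed

lemma re_props:
  assumes M: "M \<in> carrier_mat n n"
  shows "re_mat M \<in> carrier_mat n n"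
    "\<And>i j. i < n \<Longrightarrow> j < n \<Longrightarrow> re_mat M $$ (i,j) = (M $$ (i,j) + cnj (M $$ (j,i))) / 2"
proof -
  note a = adj_props[OF M]
  show "re_mat M \<in> carrier_mat n n" unfolding re_mat_def using M a by auto
  fix i j assume "i < n" "j < n"
  then show "re_mat M $$ (i,j) = (M $$ (i,j) + cnj (M $$ (j,i))) / 2"
    unfolding re_mat_def using M a by auto
qed

lemma herm_re: assumes M: "M \<in> carrier_mat n n" shows "hermitian_mat (re_mat M)"
proof -
  note r = re_props[OF M]
  have "mat_adjoint (re_mat M) = re_mat M"
  proof (rule eq_matI)
    fix i j assume "i < dim_row (re_mat M)" "j < dim_col (re_mat M)"
    then have ij: "i < n" "j < n" using r(1) by auto
    have "mat_adjoint (re_mat M) $$ (i,j) = cnj (re_mat M $$ (j,i))" using adj_props(2)[OF r(1) ij] .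
    also have "\<dots> = cnj ((M $$ (j,i) + cnj (M $$ (i,j))) / 2)" by (simp only: r(2)[OF ij(2,1)])
    also have "\<dots> = (M $$ (i,j) + cnj (M $$ (j,i))) / 2" by (simp add: add.commute)
    also have "\<dots> = re_mat M $$ (i,j)" using r(2)[OF ij] by simp
    finally show "mat_adjoint (re_mat M) $$ (i,j) = re_mat M $$ (i,j)" .
  qed (use adj_props(1)[OF r(1)] r(1) in auto)
  then show ?thesis unfolding hermitian_mat_def using r(1) by auto
qed

lemma herm_smult: assumes M: "M \<in> carrier_mat n n" and H: "hermitian_mat M"
  shows "hermitian_mat (complex_of_real c \<cdot>\<^sub>m M)"
proof -
  have c: "complex_of_real c \<cdot>\<^sub>m M \<in> carrier_mat n n" using M by auto
  have "mat_adjoint (complex_of_real c \<cdot>\<^sub>m M) = complex_of_real c \<cdot>\<^sub>m M"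
  proof (rule eq_matI)
    fix i j assume ij: "i < dim_row (complex_of_real c \<cdot>\<^sub>m M)" "j < dim_col (complex_of_real c \<cdot>\<^sub>m M)"
    then have "i < n" "j < n" using M by auto
    then have "mat_adjoint (complex_of_real c \<cdot>\<^sub>m M) $$ (i,j) = c * cnj (M $$ (j,i))"
      using adj_props(2)[OF c] M by auto
    also have "cnj (M $$ (j,i)) = M $$ (i,j)"
      using H adj_props(2)[OF M] \<open>i<n\<close> \<open>j<n\<close> unfolding hermitian_mat_def by metis
    finally show "mat_adjoint (complex_of_real c \<cdot>\<^sub>m M) $$ (i,j) = (complex_of_real c \<cdot>\<^sub>m M) $$ (i,j)"
      using \<open>i<n\<close> \<open>j<n\<close> M by auto
  qed (use adj_props(1)[OF c] c in auto)
  then show ?thesis unfolding hermitian_mat_def using c M by auto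
qed

lemma F_smult: assumes "M \<in> carrier_mat n n" "x \<in> carrier_vec n" "y \<in> carrier_vec n"
  shows "F (c \<cdot>\<^sub>m M) y x = c * F M y x"
proof -
  have "c \<cdot>\<^sub>m M \<in> carrier_mat n n" using assms by auto
  then show ?thesis using assms unfolding F_sum[OF \<open>c \<cdot>\<^sub>m M \<in> carrier_mat n n\<close> assms(2,3)] F_sum[OF assms]
    by (simp add: sum_distrib_left algebra_simps)
qed

lemma F_re: assumes M: "M \<in> carrier_mat n n" and x: "x \<in> carrier_vec n"
  shows "F (re_mat M) x x = complex_of_real (Re (F M x x))"
proof -
  note r = re_props[OF M]
  have "F (re_mat M) x x = (\<Sum>i<n. \<Sum>j<n. (M $$ (i,j) + cnj (M $$ (j,i))) / 2 * x $ j * cnj (x $ i))"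
    unfolding F_sum[OF r(1) x x] by (intro sum.cong refl) (simp add: r(2))
  also have "\<dots> = (F M x x + (\<Sum>i<n. \<Sum>j<n. cnj (M $$ (j,i)) * x $ j * cnj (x $ i))) / 2"
    unfolding F_sum[OF M x x] by (simp add: sum.distrib add_divide_distrib algebra_simps sum_divide_distrib)
  also have "(\<Sum>i<n. \<Sum>j<n. cnj (M $$ (j,i)) * x $ j * cnj (x $ i)) = cnj (F M x x)"
    unfolding F_sum[OF M x x] by (subst sum.swap) (simp add: mult.commute mult.left_commute)
  finally show ?thesis by (simp add: complex_add_cnj)
qed

lemma loewnerI:
  assumes P: "P \<in> carrier_mat n n" and Q: "Q \<in> carrier_mat n n"
    and HP: "hermitian_mat P" and HQ: "hermitian_mat Q"
    and I: "\<And>x. x \<in> carrier_vec n \<Longrightarrow> Im (F P x x) = 0 \<and> Im (F Q x x) = 0 \<and> Re (F P x x) \<le> Re (F Q x x)"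
  shows "loewner_le P Q"
proof -
  have D: "Q - P = 1 \<cdot>\<^sub>m Q + (-1) \<cdot>\<^sub>m P" by (rule eq_matI) (use P Q in auto)
  have Dc: "Q - P \<in> carrier_mat n n" using P Q by auto
  have "mat_adjoint (Q - P) = Q - P"
  proof (rule eq_matI)
    fix i j assume "i < dim_row (Q - P)" "j < dim_col (Q - P)"
    then have ij: "i < n" "j < n" using P Q by auto
    have "cnj (P $$ (j,i)) = P $$ (i,j)" "cnj (Q $$ (j,i)) = Q $$ (i,j)"
      using HP HQ adj_props(2)[OF P ij] adj_props(2)[OF Q ij] unfolding hermitian_mat_def by metis+
    then show "mat_adjoint (Q - P) $$ (i,j) = (Q - P) $$ (i,j)"
      using adj_props(2)[OF Dc ij] ij P Q by auto
  qed (use adj_props(1)[OF Dc] Dc in auto)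
  then have H: "hermitian_mat (Q - P)" unfolding hermitian_mat_def using Dc P Q by auto
  have all: "\<forall>x\<in>carrier_vec (dim_row (Q - P)). Im (((Q - P) *\<^sub>v x) \<bullet>c x) = 0 \<and> 0 \<le> Re (((Q - P) *\<^sub>v x) \<bullet>c x)"
  proof (intro ballI)
    fix x :: "complex vec" assume "x \<in> carrier_vec (dim_row (Q - P))"
    then have x: "x \<in> carrier_vec n" using Q P by auto
    have "((Q - P) *\<^sub>v x) \<bullet>c x = F Q x x - F P x x"
      unfolding F_def[symmetric] D F_add_mat[OF Q P x x] by simp
    then show "Im (((Q - P) *\<^sub>v x) \<bullet>c x) = 0 \<and> 0 \<le> Re (((Q - P) *\<^sub>v x) \<bullet>c x)"
      using I[OF x] by simp
  qed
  have "pos_semidef_mat (Q - P)" unfolding pos_semidef_mat_def using H all by auto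
  then show ?thesis unfolding loewner_le_def using P Q by auto
qed

lemma loewner_re:
  assumes X: "X \<in> carrier_mat n n" and Y: "Y \<in> carrier_mat n n"
    and I: "\<And>x. x \<in> carrier_vec n \<Longrightarrow> a * Re (F X x x) \<le> b * Re (F Y x x)"
  shows "loewner_le (complex_of_real a \<cdot>\<^sub>m re_mat X) (complex_of_real b \<cdot>\<^sub>m re_mat Y)"
proof (rule loewnerI)
  note rx = re_props[OF X] and ry = re_props[OF Y]
  show "complex_of_real a \<cdot>\<^sub>m re_mat X \<in> carrier_mat n n" "complex_of_real b \<cdot>\<^sub>m re_mat Y \<in> carrier_mat n n"
    using rx ry by auto
  show "hermitian_mat (complex_of_real a \<cdot>\<^sub>m re_mat X)" "hermitian_mat (complex_of_real b \<cdot>\<^sub>m re_mat Y)"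
    using herm_smult[OF rx(1) herm_re[OF X]] herm_smult[OF ry(1) herm_re[OF Y]] by auto
  fix x :: "complex vec" assume x: "x \<in> carrier_vec n"
  show "Im (F (complex_of_real a \<cdot>\<^sub>m re_mat X) x x) = 0 \<and> Im (F (complex_of_real b \<cdot>\<^sub>m re_mat Y) x x) = 0 \<and>
     Re (F (complex_of_real a \<cdot>\<^sub>m re_mat X) x x) \<le> Re (F (complex_of_real b \<cdot>\<^sub>m re_mat Y) x x)"
    unfolding F_smult[OF rx(1) x x] F_smult[OF ry(1) x x] F_re[OF X x] F_re[OF Y x] using I[OF x] by simp
qed


context nu begin
lemma int_affine: "(\<integral>s. c0 + c1 * s \<partial>\<nu>) = c0 + c1 * (\<integral>s. s \<partial>\<nu>)"
proof -
  have i1: "integrable \<nu> (\<lambda>s::real. c0)" "integrable \<nu> (\<lambda>s::real. c1 * s)"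
    by (intro cont_int continuous_intros)+
  show ?thesis using Bochner_Integration.integral_add[OF i1] int_const by simp
qed
end

context both begin

lemma ReQ_cont: "x \<in> carrier_vec n \<Longrightarrow> continuous_on {0..1} (\<lambda>s. Re (F (minv (Cm s)) x x))"
  using Q_cont by (intro continuous_intros) auto

lemma final_U:
  assumes m: "(\<integral>s. s \<partial>\<nu>) = t" and x: "x \<in> carrier_vec n"
  shows "Re (F (op_mean \<nu> A B) x x) \<le> (1 + \<tau>\<^sup>2) * Re (F (arith_mean t A B) x x)"
proof -
  let ?a = "Re (F A x x)" and ?b = "Re (F B x x)"
  have "Re (F (op_mean \<nu> A B) x x) = (\<integral>s. Re (F (minv (Cm s)) x x) \<partial>\<nu>)" using opmean_F[OF x] .
  also have "\<dots> \<le> (\<integral>s. (1 + \<tau>\<^sup>2) * ?a + ((1 + \<tau>\<^sup>2) * (?b - ?a)) * s \<partial>\<nu>)"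
  proof (rule int_mono_cont[OF ReQ_cont[OF x]])
    show "continuous_on {0..1} (\<lambda>s. (1 + \<tau>\<^sup>2) * ?a + ((1 + \<tau>\<^sup>2) * (?b - ?a)) * s)"
      by (intro continuous_intros)
    fix s :: real assume "0 \<le> s" "s \<le> 1"
    then show "Re (F (minv (Cm s)) x x) \<le> (1 + \<tau>\<^sup>2) * ?a + ((1 + \<tau>\<^sup>2) * (?b - ?a)) * s"
      using PU[OF _ _ x, of s] by (simp add: algebra_simps)
  qed
  also have "\<dots> = (1 + \<tau>\<^sup>2) * ((1-t) * ?a + t * ?b)" unfolding int_affine m by (simp add: algebra_simps)
  also have "\<dots> = (1 + \<tau>\<^sup>2) * Re (F (arith_mean t A B) x x)"
    unfolding arith_mean_def F_add_mat[OF A B x x] by simp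
  finally show ?thesis .
qed

lemma final_L:
  assumes m: "(\<integral>s. s \<partial>\<nu>) = t" and t: "0 \<le> t" "t \<le> 1" and x: "x \<in> carrier_vec n"
  shows "Re (F (minv (Cm t)) x x) \<le> (1 + \<tau>\<^sup>2) * Re (F (op_mean \<nu> A B) x x)"
proof -
  define y where "y = minv (Cm t) *\<^sub>v x"
  note P = Pt[OF t x, folded y_def]
  let ?c = "2 * Re (x \<bullet>c y)" and ?a = "Re (F (minv A) y y)" and ?b = "Re (F (minv B) y y)"
  have "Re (F (minv (Cm t)) x x) = ?c - ((1-t) * ?a + t * ?b)" using P(1) by simp
  also have "\<dots> = (\<integral>s. (?c - ?a) + (?a - ?b) * s \<partial>\<nu>)" unfolding int_affine m by (simp add: algebra_simps)
  also have "\<dots> \<le> (\<integral>s. (1 + \<tau>\<^sup>2) * Re (F (minv (Cm s)) x x) \<partial>\<nu>)"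
  proof (rule int_mono_cont)
    show "continuous_on {0..1} (\<lambda>s. (?c - ?a) + (?a - ?b) * s)" by (intro continuous_intros)
    show "continuous_on {0..1} (\<lambda>s. (1 + \<tau>\<^sup>2) * Re (F (minv (Cm s)) x x))"
      by (intro continuous_intros ReQ_cont x)
    fix s :: real assume "0 \<le> s" "s \<le> 1"
    then show "(?c - ?a) + (?a - ?b) * s \<le> (1 + \<tau>\<^sup>2) * Re (F (minv (Cm s)) x x)"
      using PL[OF _ _ x P(2), of s] by (simp add: algebra_simps)
  qed
  also have "\<dots> = (1 + \<tau>\<^sup>2) * Re (F (op_mean \<nu> A B) x x)"
    unfolding opmean_F[OF x] by simp
  finally show ?thesis .
qed

end

lemma sec_tan: assumes "0 \<le> \<alpha>" "\<alpha> < pi/2"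
  shows "cos \<alpha> > 0" "1 / (cos \<alpha>)\<^sup>2 = 1 + (tan \<alpha>)\<^sup>2" "(cos \<alpha>)\<^sup>2 = 1 / (1 + (tan \<alpha>)\<^sup>2)" "tan \<alpha> \<ge> 0"
proof -
  show c: "cos \<alpha> > 0" using assms by (intro cos_gt_zero_pi) auto
  have "sin \<alpha> \<ge> 0" using assms by (intro sin_ge_zero) auto
  then show "tan \<alpha> \<ge> 0" using c unfolding tan_def by simp
  have "1 + (tan \<alpha>)\<^sup>2 = ((cos \<alpha>)\<^sup>2 + (sin \<alpha>)\<^sup>2) / (cos \<alpha>)\<^sup>2"
    using c unfolding tan_def by (simp add: field_simps power2_eq_square)
  also have "\<dots> = 1 / (cos \<alpha>)\<^sup>2" by simp
  finally show "1 / (cos \<alpha>)\<^sup>2 = 1 + (tan \<alpha>)\<^sup>2" by simp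
  then show "(cos \<alpha>)\<^sup>2 = 1 / (1 + (tan \<alpha>)\<^sup>2)" by (metis inverse_eq_divide inverse_inverse_eq)
qed

theorem mainTheorem9:
  fixes A B :: "complex mat" and n :: nat and \<alpha> t :: real
    and f :: "real \<Rightarrow> real" and \<nu> :: "real measure"
  assumes "A \<in> carrier_mat n n" and "B \<in> carrier_mat n n"
    and "accretive A" and "accretive B"
    and "0 \<le> \<alpha>" and "\<alpha> < pi / 2"
    and "num_range A \<subseteq> sector \<alpha>" and "num_range B \<subseteq> sector \<alpha>"
    and "matrix_monotone_class f"
    and "represents \<nu> f"
    and "(f has_real_derivative t) (at 1)" and "0 < t" and "t < 1"
  shows "loewner_le (complex_of_real ((cos \<alpha>)\<^sup>2) \<cdot>\<^sub>m re_mat (harm_mean t A B)) (re_mat (op_mean \<nu> A B))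
       \<and> loewner_le (re_mat (op_mean \<nu> A B)) (complex_of_real (1 / (cos \<alpha>)\<^sup>2) \<cdot>\<^sub>m re_mat (arith_mean t A B))"
proof -
  note as = assms
  define \<tau> where "\<tau> = tan \<alpha>"
  have tau: "\<tau> \<ge> 0" unfolding \<tau>_def using sec_tan(4)[OF as(5,6)] .
  have f1: "posf A n" "posf B n" "sect A n \<tau>" "sect B n \<tau>"
    using sector_from_range[OF as(1) as(7)] sector_from_range[OF as(2) as(8)] \<tau>_def by auto
  have f2: "prob_space \<nu>" "sets \<nu> = sets (restrict_space borel {0..1})"
    using as(10) unfolding represents_def by auto
  interpret both A B n \<tau> \<nu>
    using f1 f2 tau as(1,2) by (simp add: both_def setting_def nu_def)
  have m: "(\<integral>s. s \<partial>\<nu>) = t"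
    using mean_deriv[OF _ as(11)] as(10) unfolding represents_def by auto
  note st = sec_tan[OF as(5,6), folded \<tau>_def]
  have OC: "op_mean \<nu> A B \<in> carrier_mat n n" unfolding op_mean_def using as(1) by auto
  have HC: "harm_mean t A B \<in> carrier_mat n n"
    unfolding harm_eq using inv_props(2)[OF Cm_carrier[of t] Cm_props(1)[of t]] as(12,13) by auto
  have AC: "arith_mean t A B \<in> carrier_mat n n" unfolding arith_mean_def using as(1,2) by auto
  have one: "complex_of_real 1 \<cdot>\<^sub>m re_mat M = re_mat M" if "M \<in> carrier_mat n n" for M
    using re_props(1)[OF that] by (intro eq_matI) auto
  have L1: "loewner_le (complex_of_real ((cos \<alpha>)\<^sup>2) \<cdot>\<^sub>m re_mat (harm_mean t A B))
      (complex_of_real 1 \<cdot>\<^sub>m re_mat (op_mean \<nu> A B))"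
  proof (rule loewner_re[OF HC OC])
    fix x :: "complex vec" assume x: "x \<in> carrier_vec n"
    have "Re (F (minv (Cm t)) x x) \<le> (1 + \<tau>\<^sup>2) * Re (F (op_mean \<nu> A B) x x)"
      using final_L[OF m _ _ x] as(12,13) by auto
    then show "(cos \<alpha>)\<^sup>2 * Re (F (harm_mean t A B) x x) \<le> 1 * Re (F (op_mean \<nu> A B) x x)"
      unfolding harm_eq st(3) using tau by (simp add: field_simps add_pos_nonneg)
  qed
  have L2: "loewner_le (complex_of_real 1 \<cdot>\<^sub>m re_mat (op_mean \<nu> A B))
      (complex_of_real (1 / (cos \<alpha>)\<^sup>2) \<cdot>\<^sub>m re_mat (arith_mean t A B))"
  proof (rule loewner_re[OF OC AC])
    fix x :: "complex vec" assume x: "x \<in> carrier_vec n"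
    show "1 * Re (F (op_mean \<nu> A B) x x) \<le> (1 / (cos \<alpha>)\<^sup>2) * Re (F (arith_mean t A B) x x)"
      unfolding st(2) using final_U[OF m x] by simp
  qed
  show ?thesis using L1 L2 one[OF OC] by simp
qed


end
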